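(* Let $X$ be a finite set and let $\mathcal{P}=\{X_1,\ldots,X_m\}$ be an $(m,k)$-partition of $X$ such that, for each $i\in\{1,\ldots,k\}$, $\mathcal{P}$ has exactly $m_i\ge1$ blocks of size $n_i\ge1$. Then \[|T(X,\mathcal{P})|=\prod_{i=1}^k\Bigg(\sum_{j=1}^k m_j n_j^{\,n_i}\Bigg)^{m_i}.\]
   Context: An $(m,k)$-partition is a partition with exactly $m$ blocks having exactly $k$ distinct block sizes (here $n_1,\ldots,n_k$ are the distinct block sizes). $T(X,\mathcal{P})$ is the set of all maps $f\colon X\to X$ such that for every block $B$ of $\mathcal{P}$ there is a block $C$ of $\mathcal{P}$ with $Bf\subseteq C$. *)

theory Defs
  imports Main "HOL-Library.FuncSet" "HOL-Library.Disjoint_Sets"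
begin

definition T_part :: "'a set \<Rightarrow> 'a set set \<Rightarrow> ('a \<Rightarrow> 'a) set" where
  "T_part X P = {f \<in> X \<rightarrow>\<^sub>E X. \<forall>B\<in>P. \<exists>C\<in>P. f ` B \<subseteq> C}"

end

theory Submission
  imports Defs
begin

lemma G_card:
  fixes P Q :: "'a set set" and Y :: "'a set"
  assumes fin: "finite Q" and QP: "Q \<subseteq> P" and dis: "disjoint P"
    and finB: "\<And>B. B \<in> P \<Longrightarrow> finite B"
  shows "card {f \<in> \<Union>Q \<rightarrow>\<^sub>E Y. \<forall>B\<in>Q. \<exists>C\<in>P. f ` B \<subseteq> C}
       = (\<Prod>B\<in>Q. card {g \<in> B \<rightarrow>\<^sub>E Y. \<exists>C\<in>P. g ` B \<subseteq> C})"
  using fin QP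
proof (induction Q rule: finite_induct)
  case empty
  have "{f \<in> \<Union>{} \<rightarrow>\<^sub>E Y. \<forall>B\<in>{}. \<exists>C\<in>P. f ` B \<subseteq> C} = {\<lambda>x. undefined}"
    by auto
  then show ?case by simp
next
  case (insert B Q)
  define G where "G = {f \<in> \<Union>Q \<rightarrow>\<^sub>E Y. \<forall>B\<in>Q. \<exists>C\<in>P. f ` B \<subseteq> C}"
  define H where "H = {g \<in> B \<rightarrow>\<^sub>E Y. \<exists>C\<in>P. g ` B \<subseteq> C}"
  define G' where "G' = {f \<in> \<Union>(insert B Q) \<rightarrow>\<^sub>E Y. \<forall>B\<in>insert B Q. \<exists>C\<in>P. f ` B \<subseteq> C}"
  have BQ: "B \<inter> \<Union>Q = {}"
  proof -
    have "B \<inter> B' = {}" if "B' \<in> Q" for B'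
    proof -
      have "B' \<noteq> B" "B' \<in> P" "B \<in> P" using that insert by auto
      then show ?thesis using dis unfolding disjoint_def by blast
    qed
    then show ?thesis by blast
  qed
  define \<phi> :: "('a \<Rightarrow> 'a) \<Rightarrow> ('a \<Rightarrow> 'a) \<times> ('a \<Rightarrow> 'a)" where "\<phi> = (\<lambda>f. (restrict f (\<Union>Q), restrict f B))"
  have inj: "inj_on \<phi> G'"
  proof (rule inj_onI)
    fix f f' assume a: "f \<in> G'" "f' \<in> G'" "\<phi> f = \<phi> f'"
    show "f = f'"
    proof
      fix x
      show "f x = f' x"
      proof (cases "x \<in> B \<union> \<Union>Q")
        case True
        have e1: "restrict f (\<Union>Q) x = restrict f' (\<Union>Q) x" and e2: "restrict f B x = restrict f' B x"
          using a(3) unfolding \<phi>_def by simp_all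
        show ?thesis
        proof (cases "x \<in> B")
          case True then show ?thesis using e2 by simp
        next
          case False then have "x \<in> \<Union>Q" using \<open>x \<in> B \<union> \<Union>Q\<close> by blast
          then show ?thesis using e1 by simp
        qed
      next
        case False
        then show ?thesis using a(1,2) unfolding G'_def by (auto simp: PiE_def extensional_def)
      qed
    qed
  qed
  have img: "\<phi> ` G' = G \<times> H"
  proof
    show "\<phi> ` G' \<subseteq> G \<times> H"
    proof
      fix p assume "p \<in> \<phi> ` G'"
      then obtain f where f: "f \<in> G'" "p = \<phi> f" by auto
      have "restrict f (\<Union>Q) \<in> G"
      proof -
        have "restrict f (\<Union>Q) \<in> \<Union>Q \<rightarrow>\<^sub>E Y" using f(1) unfolding G'_def by (auto simp: PiE_def Pi_def)
        moreover have "\<forall>B'\<in>Q. \<exists>C\<in>P. restrict f (\<Union>Q) ` B' \<subseteq> C"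
        proof
          fix B' assume b: "B' \<in> Q"
          then have "restrict f (\<Union>Q) ` B' = f ` B'" by auto
          then show "\<exists>C\<in>P. restrict f (\<Union>Q) ` B' \<subseteq> C" using f(1) b unfolding G'_def by auto
        qed
        ultimately show ?thesis unfolding G_def by blast
      qed
      moreover have "restrict f B \<in> H"
      proof -
        have "restrict f B \<in> B \<rightarrow>\<^sub>E Y" using f(1) unfolding G'_def by (auto simp: PiE_def Pi_def)
        moreover have "restrict f B ` B = f ` B" by auto
        ultimately show ?thesis using f(1) unfolding H_def G'_def by auto
      qed
      ultimately show "p \<in> G \<times> H" using f(2) unfolding \<phi>_def by auto
    qed
  next
    show "G \<times> H \<subseteq> \<phi> ` G'"
    proof
      fix p assume p: "p \<in> G \<times> H"
      obtain g h where gh: "p = (g, h)" "g \<in> G" "h \<in> H" using p by auto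
      define f where "f = (\<lambda>x. if x \<in> B then h x else g x)"
      have "f \<in> G'"
      proof -
        have "f \<in> \<Union>(insert B Q) \<rightarrow>\<^sub>E Y"
          using gh(2,3) unfolding f_def G_def H_def by (auto simp: PiE_def Pi_def extensional_def)
        moreover have "\<exists>C\<in>P. f ` B' \<subseteq> C" if "B' \<in> insert B Q" for B'
        proof (cases "B' = B")
          case True
          then show ?thesis using gh(3) unfolding H_def f_def by auto
        next
          case False
          then have "B' \<in> Q" using that by auto
          then have "f ` B' = g ` B'" using BQ unfolding f_def by auto
          then show ?thesis using gh(2) \<open>B' \<in> Q\<close> unfolding G_def by auto
        qed
        ultimately show ?thesis unfolding G'_def by auto
      qed
      moreover have "\<phi> f = p"
      proof -
        have "restrict f (\<Union>Q) = g"
        proof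
          fix x show "restrict f (\<Union>Q) x = g x"
            using gh(2) BQ unfolding f_def G_def by (auto simp: PiE_def extensional_def)
        qed
        moreover have "restrict f B = h"
        proof
          fix x show "restrict f B x = h x"
            using gh(3) unfolding f_def H_def by (auto simp: PiE_def extensional_def)
        qed
        ultimately show ?thesis unfolding \<phi>_def gh(1) by simp
      qed
      ultimately show "p \<in> \<phi> ` G'" by blast
    qed
  qed
  have "card G' = card (G \<times> H)" using card_image[OF inj] img by simp
  also have "\<dots> = card G * card H" by (simp add: card_cartesian_product)
  also have "card G = (\<Prod>B\<in>Q. card {g \<in> B \<rightarrow>\<^sub>E Y. \<exists>C\<in>P. g ` B \<subseteq> C})"
    using insert unfolding G_def by auto
  finally show ?case unfolding G'_def H_def using insert by (simp add: mult.commute)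
qed

lemma H_card:
  assumes "partition_on X P" "finite X" "B \<in> P"
  shows "card {g \<in> B \<rightarrow>\<^sub>E X. \<exists>C\<in>P. g ` B \<subseteq> C} = (\<Sum>C\<in>P. card C ^ card B)"
proof -
  have PX: "\<And>C. C \<in> P \<Longrightarrow> C \<subseteq> X" using assms(1) unfolding partition_on_def by auto
  have finP: "finite P" using assms(1,2) finite_UnionD unfolding partition_on_def by auto
  have finC: "\<And>C. C \<in> P \<Longrightarrow> finite C" using PX assms(2) finite_subset by blast
  have ne: "B \<noteq> {}" using assms(1,3) unfolding partition_on_def by auto
  have dis: "disjoint P" using assms(1) unfolding partition_on_def by auto
  have eq: "{g \<in> B \<rightarrow>\<^sub>E X. \<exists>C\<in>P. g ` B \<subseteq> C} = (\<Union>C\<in>P. B \<rightarrow>\<^sub>E C)"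
  proof
    show "{g \<in> B \<rightarrow>\<^sub>E X. \<exists>C\<in>P. g ` B \<subseteq> C} \<subseteq> (\<Union>C\<in>P. B \<rightarrow>\<^sub>E C)"
      by (auto simp: PiE_def Pi_def)
  next
    show "(\<Union>C\<in>P. B \<rightarrow>\<^sub>E C) \<subseteq> {g \<in> B \<rightarrow>\<^sub>E X. \<exists>C\<in>P. g ` B \<subseteq> C}"
      using PX by (auto simp: PiE_def Pi_def)
  qed
  have "card (\<Union>C\<in>P. B \<rightarrow>\<^sub>E C) = (\<Sum>C\<in>P. card (B \<rightarrow>\<^sub>E C))"
  proof (rule card_UN_disjoint)
    show "finite P" by fact
    show "\<forall>C\<in>P. finite (B \<rightarrow>\<^sub>E C)"
      using finC assms(3) by (auto intro: finite_PiE)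
    show "\<forall>C\<in>P. \<forall>C'\<in>P. C \<noteq> C' \<longrightarrow> (B \<rightarrow>\<^sub>E C) \<inter> (B \<rightarrow>\<^sub>E C') = {}"
    proof (intro ballI impI)
      fix C C' assume c: "C \<in> P" "C' \<in> P" "C \<noteq> C'"
      obtain b where b: "b \<in> B" using ne by auto
      have "C \<inter> C' = {}" using dis c unfolding disjoint_def by blast
      then show "(B \<rightarrow>\<^sub>E C) \<inter> (B \<rightarrow>\<^sub>E C') = {}" using b by (auto simp: PiE_def Pi_def)
    qed
  qed
  also have "\<dots> = (\<Sum>C\<in>P. card C ^ card B)"
    using finC assms(3) by (simp add: card_PiE)
  finally show ?thesis using eq by simp
qed

theorem theorem6p1:
  fixes X :: "'a set" and P :: "'a set set" and k :: nat and n m :: "nat \<Rightarrow> nat"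
  assumes "finite X"
    and "partition_on X P"
    and "inj_on n {1..k}"
    and "card ` P = n ` {1..k}"
    and "\<And>i. i \<in> {1..k} \<Longrightarrow> n i \<ge> 1"
    and "\<And>i. i \<in> {1..k} \<Longrightarrow> m i \<ge> 1"
    and "\<And>i. i \<in> {1..k} \<Longrightarrow> card {B \<in> P. card B = n i} = m i"
  shows "card (T_part X P) = (\<Prod>i=1..k. (\<Sum>j=1..k. m j * n j ^ n i) ^ m i)"
proof -
  have UP: "\<Union>P = X" and dis: "disjoint P" using assms(2) unfolding partition_on_def by auto
  have finP: "finite P" using assms(1) UP by (metis finite_UnionD)
  have finB: "\<And>B. B \<in> P \<Longrightarrow> finite B" using UP assms(1) by (metis Union_upper finite_subset)
  have T: "T_part X P = {f \<in> \<Union>P \<rightarrow>\<^sub>E X. \<forall>B\<in>P. \<exists>C\<in>P. f ` B \<subseteq> C}"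
    unfolding T_part_def UP ..
  have S: "\<And>s. (\<Sum>C\<in>P. card C ^ s) = (\<Sum>j=1..k. m j * n j ^ s)"
  proof -
    fix s
    have "(\<Sum>C\<in>P. card C ^ s) = (\<Sum>t\<in>card ` P. \<Sum>C\<in>{C. C \<in> P \<and> card C = t}. card C ^ s)"
      by (rule sum.image_gen[OF finP])
    also have "\<dots> = (\<Sum>t\<in>n ` {1..k}. card {C \<in> P. card C = t} * t ^ s)"
      unfolding assms(4) by (rule sum.cong[OF refl]) simp
    also have "\<dots> = (\<Sum>j\<in>{1..k}. card {C \<in> P. card C = n j} * n j ^ s)"
      by (rule sum.reindex[OF assms(3), unfolded comp_def])
    also have "\<dots> = (\<Sum>j=1..k. m j * n j ^ s)"
      by (rule sum.cong[OF refl]) (simp only: assms(7))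
    finally show "(\<Sum>C\<in>P. card C ^ s) = (\<Sum>j=1..k. m j * n j ^ s)" .
  qed
  have "card (T_part X P) = (\<Prod>B\<in>P. card {g \<in> B \<rightarrow>\<^sub>E X. \<exists>C\<in>P. g ` B \<subseteq> C})"
    unfolding T by (rule G_card[OF finP order_refl dis finB])
  also have "\<dots> = (\<Prod>B\<in>P. (\<Sum>C\<in>P. card C ^ card B))"
    by (rule prod.cong[OF refl]) (rule H_card[OF assms(2,1)])
  also have "\<dots> = (\<Prod>B\<in>P. (\<Sum>j=1..k. m j * n j ^ card B))"
    by (simp only: S)
  also have "\<dots> = (\<Prod>t\<in>card ` P. \<Prod>B\<in>{B. B \<in> P \<and> card B = t}. (\<Sum>j=1..k. m j * n j ^ card B))"
    by (rule prod.image_gen[OF finP])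
  also have "\<dots> = (\<Prod>t\<in>n ` {1..k}. (\<Sum>j=1..k. m j * n j ^ t) ^ card {B \<in> P. card B = t})"
    unfolding assms(4) by (rule prod.cong[OF refl]) simp
  also have "\<dots> = (\<Prod>i\<in>{1..k}. (\<Sum>j=1..k. m j * n j ^ n i) ^ card {B \<in> P. card B = n i})"
    by (rule prod.reindex[OF assms(3), unfolded comp_def])
  also have "\<dots> = (\<Prod>i=1..k. (\<Sum>j=1..k. m j * n j ^ n i) ^ m i)"
    by (rule prod.cong[OF refl]) (simp only: assms(7))
  finally show ?thesis .
qed

end
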